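(* Let $P$ be a positive integer, let subcarrier indices be taken modulo $P$, let $\mathbb{P}^{\mathrm{DL}}$ be a set of subcarrier indices, and let $\mathcal{X}:\mathbb{Z}/P\mathbb{Z}\to\mathbb{C}$ be any function. For integers $k\ge 0$ and indices $p$, let $$\mathbb{Q}^{2k+1}_p=\Big\{(q_1,\dots,q_{2k+1})\in(\mathbb{P}^{\mathrm{DL}})^{2k+1} : \textstyle\sum_{i=1}^{k+1}q_i-\sum_{i=k+2}^{2k+1}q_i\equiv p \pmod P\Big\}$$ and $$\Phi_{2k+1}[p]=\frac{1}{P^{2k+1}}\sum_{(q_1,\dots,q_{2k+1})\in\mathbb{Q}^{2k+1}_p}\ \prod_{i=1}^{k+1}\mathcal{X}[q_i]\prod_{i=k+2}^{2k+1}\overline{\mathcal{X}[q_i]}.$$ Then for every integer $k\ge 1$ and every index $p$, $$\Phi_{2k+1}[p]=\frac{1}{P^{2}}\sum_{q_1,q_2\in\mathbb{P}^{\mathrm{DL}}}\mathcal{X}[q_1]\,\mathcal{X}[q_2]\,\overline{\Phi_{2k-1}[q_1+q_2-p]},$$ and also $$\Phi_{2k+1}[p]=\frac{1}{P^{2}}\sum_{q_1,q_{k+2}\in\mathbb{P}^{\mathrm{DL}}}\mathcal{X}[q_1]\,\overline{\mathcal{X}[q_{k+2}]}\,\Phi_{2k-1}[p-q_1+q_{k+2}],$$ where all index arithmetic is modulo $P$.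
   Context: This models an OFDM system with $P$ subcarriers; $\mathbb{P}^{\mathrm{DL}}=\{p^{\mathrm{DL}}_{\mathrm{start}},\dots,p^{\mathrm{DL}}_{\mathrm{end}}\}$ is the set of downlink subcarriers, $\mathcal{X}$ plays the role of the (IQ-imbalanced) frequency-domain downlink signal $\mathcal{X}^{\mathrm{IQ}}_m$ of one OFDM symbol, and $\Phi_{2k+1}$ is the $(2k+1)$th order intermodulation-distortion nonlinear basis in the frequency domain. $\overline{z}$ denotes complex conjugation. *)

theory Defs
  imports Complex_Main "HOL-Library.FuncSet"
begin

text \<open>Subcarrier indices are integers, arithmetic is modulo P. Tuples
(q_1,...,q_{2k+1}) are represented 0-based as extensional functions on {..<2k+1};
positions 0..k are the non-conjugated ones, k+1..2k the conjugated ones.\<close>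

definition Qset :: "int \<Rightarrow> int set \<Rightarrow> nat \<Rightarrow> int \<Rightarrow> (nat \<Rightarrow> int) set" where
  "Qset P PDL k p = {q \<in> {..<2*k+1} \<rightarrow>\<^sub>E PDL.
      ((\<Sum>i<k+1. q i) - (\<Sum>i\<in>{k+1..<2*k+1}. q i)) mod P = p mod P}"

definition Phi :: "int \<Rightarrow> int set \<Rightarrow> (int \<Rightarrow> complex) \<Rightarrow> nat \<Rightarrow> int \<Rightarrow> complex" where
  "Phi P PDL X k p = 1 / (of_int P) ^ (2*k+1) *
     (\<Sum>q\<in>Qset P PDL k p. (\<Prod>i<k+1. X (q i)) * (\<Prod>i\<in>{k+1..<2*k+1}. cnj (X (q i))))"

end

theory Submission
  imports Defs
begin

context
  fixes P :: int and PDL :: "int set" and X :: "int \<Rightarrow> complex"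
begin

definition G :: "nat set \<Rightarrow> nat set \<Rightarrow> int \<Rightarrow> complex" where
  "G A B s = (\<Sum>q\<in>(A \<union> B) \<rightarrow>\<^sub>E PDL.
     if ((\<Sum>i\<in>A. q i) - (\<Sum>i\<in>B. q i)) mod P = s mod P
     then (\<Prod>i\<in>A. X (q i)) * (\<Prod>i\<in>B. cnj (X (q i))) else 0)"

lemma modshift: "((x::int) + y) mod P = s mod P \<longleftrightarrow> y mod P = (s - x) mod P"
  by (simp add: mod_eq_dvd_iff algebra_simps)

lemma modshift2: "(y - (x::int)) mod P = s mod P \<longleftrightarrow> y mod P = (s + x) mod P"
  by (simp add: mod_eq_dvd_iff algebra_simps)

lemma G_ins:
  assumes "finite A" "finite B" "a \<notin> A" "a \<notin> B"
  shows "G (insert a A) B s = (\<Sum>x\<in>PDL. X x * G A B (s - x))"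
    and "G A (insert a B) s = (\<Sum>x\<in>PDL. cnj (X x) * G A B (s + x))"
proof -
  have inj: "inj_on (\<lambda>(y, g). g(a := y)) (PDL \<times> ((A \<union> B) \<rightarrow>\<^sub>E PDL))"
    using inj_combinator[of a "A \<union> B" "\<lambda>_. PDL"] assms by auto
  have img: "insert a (A \<union> B) \<rightarrow>\<^sub>E PDL = (\<lambda>(y, g). g(a := y)) ` (PDL \<times> ((A \<union> B) \<rightarrow>\<^sub>E PDL))"
    using PiE_insert_eq[of a "A \<union> B" "\<lambda>_. PDL"] by simp
  have gen: "(\<Sum>q\<in>insert a (A \<union> B) \<rightarrow>\<^sub>E PDL. f q) = (\<Sum>y\<in>PDL. \<Sum>g\<in>(A \<union> B) \<rightarrow>\<^sub>E PDL. f (g(a := y)))"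
    for f :: "(nat \<Rightarrow> int) \<Rightarrow> complex"
  proof -
    have "(\<Sum>q\<in>insert a (A \<union> B) \<rightarrow>\<^sub>E PDL. f q) = (\<Sum>z\<in>PDL \<times> ((A \<union> B) \<rightarrow>\<^sub>E PDL). f ((\<lambda>(y, g). g(a := y)) z))"
      unfolding img by (rule sum.reindex[OF inj, unfolded comp_def])
    also have "\<dots> = (\<Sum>y\<in>PDL. \<Sum>g\<in>(A \<union> B) \<rightarrow>\<^sub>E PDL. f (g(a := y)))"
      unfolding sum.cartesian_product by (rule sum.cong) auto
    finally show ?thesis .
  qed
  have sA: "(\<Sum>i\<in>A. (g(a:=y)) i) = (\<Sum>i\<in>A. g i)" for g y
    using assms by (intro sum.cong) auto
  have sB: "(\<Sum>i\<in>B. (g(a:=y)) i) = (\<Sum>i\<in>B. g i)" for g y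
    using assms by (intro sum.cong) auto
  have pA: "(\<Prod>i\<in>A. X ((g(a:=y)) i)) = (\<Prod>i\<in>A. X (g i))" for g y
    using assms by (intro prod.cong) auto
  have pB: "(\<Prod>i\<in>B. cnj (X ((g(a:=y)) i))) = (\<Prod>i\<in>B. cnj (X (g i)))" for g y
    using assms by (intro prod.cong) auto
  show "G (insert a A) B s = (\<Sum>x\<in>PDL. X x * G A B (s - x))"
    unfolding G_def Un_insert_left gen sum_distrib_left
  proof (intro sum.cong refl)
    fix y g assume "g \<in> (A \<union> B) \<rightarrow>\<^sub>E PDL"
    have e1: "(\<Sum>i\<in>insert a A. (g(a:=y)) i) = y + (\<Sum>i\<in>A. g i)"
      using assms by (simp add: sA[of g y, symmetric])
    have e2: "(\<Prod>i\<in>insert a A. X ((g(a:=y)) i)) = X y * (\<Prod>i\<in>A. X (g i))"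
      using assms by (simp add: pA[of g y, symmetric])
    show "(if ((\<Sum>i\<in>insert a A. (g(a:=y)) i) - (\<Sum>i\<in>B. (g(a:=y)) i)) mod P = s mod P
     then (\<Prod>i\<in>insert a A. X ((g(a:=y)) i)) * (\<Prod>i\<in>B. cnj (X ((g(a:=y)) i))) else 0) =
      X y * (if ((\<Sum>i\<in>A. g i) - (\<Sum>i\<in>B. g i)) mod P = (s - y) mod P
     then (\<Prod>i\<in>A. X (g i)) * (\<Prod>i\<in>B. cnj (X (g i))) else 0)"
      unfolding e1 e2 sB pB using modshift[of y "(\<Sum>i\<in>A. g i) - (\<Sum>i\<in>B. g i)" s]
      by (simp add: algebra_simps)
  qed
  show "G A (insert a B) s = (\<Sum>x\<in>PDL. cnj (X x) * G A B (s + x))"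
    unfolding G_def Un_insert_right gen sum_distrib_left
  proof (intro sum.cong refl)
    fix y g assume "g \<in> (A \<union> B) \<rightarrow>\<^sub>E PDL"
    have e1: "(\<Sum>i\<in>insert a B. (g(a:=y)) i) = y + (\<Sum>i\<in>B. g i)"
      using assms by (simp add: sB[of g y, symmetric])
    have e2: "(\<Prod>i\<in>insert a B. cnj (X ((g(a:=y)) i))) = cnj (X y) * (\<Prod>i\<in>B. cnj (X (g i)))"
      using assms by (simp add: pB[of g y, symmetric])
    show "(if ((\<Sum>i\<in>A. (g(a:=y)) i) - (\<Sum>i\<in>insert a B. (g(a:=y)) i)) mod P = s mod P
     then (\<Prod>i\<in>A. X ((g(a:=y)) i)) * (\<Prod>i\<in>insert a B. cnj (X ((g(a:=y)) i))) else 0) =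
      cnj (X y) * (if ((\<Sum>i\<in>A. g i) - (\<Sum>i\<in>B. g i)) mod P = (s + y) mod P
     then (\<Prod>i\<in>A. X (g i)) * (\<Prod>i\<in>B. cnj (X (g i))) else 0)"
      unfolding e1 e2 sA pA using modshift2[of "(\<Sum>i\<in>A. g i) - (\<Sum>i\<in>B. g i)" y s]
      by (simp add: algebra_simps)
  qed
qed

fun F :: "nat \<Rightarrow> nat \<Rightarrow> int \<Rightarrow> complex" where
  "F 0 0 s = (if s mod P = 0 then 1 else 0)"
| "F 0 (Suc m) s = (\<Sum>x\<in>PDL. cnj (X x) * F 0 m (s + x))"
| "F (Suc n) m s = (\<Sum>x\<in>PDL. X x * F n m (s - x))"

lemma G_empty: "G {} {} s = (if s mod P = 0 then 1 else 0)"
  unfolding G_def by auto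

lemma G_F0: "finite B \<Longrightarrow> G {} B s = F 0 (card B) s"
proof (induction B arbitrary: s rule: finite_induct)
  case empty then show ?case by (simp add: G_empty)
next
  case (insert b B) then show ?case by (simp add: G_ins(2))
qed

lemma G_F: "finite A \<Longrightarrow> finite B \<Longrightarrow> A \<inter> B = {} \<Longrightarrow> G A B s = F (card A) (card B) s"
proof (induction A arbitrary: s rule: finite_induct)
  case empty then show ?case by (simp add: G_F0)
next
  case (insert a A) then show ?case by (simp add: G_ins(1))
qed

lemma F_mod: "s mod P = t mod P \<Longrightarrow> F n m s = F n m t"
proof (induction n arbitrary: s t)
  case 0
  then show ?case
  proof (induction m arbitrary: s t)
    case 0 then show ?case by simp
  next
    case (Suc m)
    have "F 0 m (s + x) = F 0 m (t + x)" for x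
      by (rule Suc.IH) (metis Suc.prems mod_add_left_eq)
    then show ?case by simp
  qed
next
  case (Suc n)
    have "F n m (s - x) = F n m (t - x)" for x
      by (rule Suc.IH) (metis Suc.prems mod_diff_left_eq)
    then show ?case by simp
qed

lemma F_B: "F n (Suc m) s = (\<Sum>x\<in>PDL. cnj (X x) * F n m (s + x))"
proof (induction n arbitrary: s)
  case 0 then show ?case by simp
next
  case (Suc n)
  have "F (Suc n) (Suc m) s = (\<Sum>x\<in>PDL. \<Sum>y\<in>PDL. X x * (cnj (X y) * F n m (s - x + y)))"
    by (simp add: Suc sum_distrib_left)
  also have "\<dots> = (\<Sum>y\<in>PDL. \<Sum>x\<in>PDL. cnj (X y) * (X x * F n m (s + y - x)))"
    by (subst sum.swap) (simp add: algebra_simps)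
  also have "\<dots> = (\<Sum>x\<in>PDL. cnj (X x) * F (Suc n) m (s + x))"
    by (simp add: sum_distrib_left)
  finally show ?case .
qed

lemma F_cnj: "cnj (F n m s) = F m n (- s)"
proof (induction n arbitrary: s)
  case 0
  show ?case
  proof (induction m arbitrary: s)
    case 0 then show ?case by (simp add: mod_eq_0_iff_dvd)
  next
    case (Suc m)
    have "-s - x = - (s + x)" for x by simp
    then show ?case by (simp only: F.simps cnj_sum complex_cnj_mult complex_cnj_cnj Suc.IH)
  qed
next
  case (Suc n)
  show ?case
  proof -
    have "cnj (F (Suc n) m s) = (\<Sum>x\<in>PDL. cnj (X x) * F m n (- s + x))"
      by (simp only: F.simps cnj_sum complex_cnj_mult Suc.IH minus_diff_eq) (simp add: algebra_simps)
    then show ?thesis by (simp add: F_B)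
  qed
qed

end

lemma Phi_F:
  assumes "finite PDL"
  shows "Phi P PDL X k p = 1 / (of_int P) ^ (2*k+1) * F P PDL X (k+1) k p"
proof -
  have U: "{..<k+1} \<union> {k+1..<2*k+1} = {..<2*k+1}" by auto
  have D: "{..<k+1} \<inter> {k+1..<2*k+1} = {}" by auto
  have "G P PDL X {..<k+1} {k+1..<2*k+1} p = F P PDL X (k+1) k p"
    using G_F[OF _ _ D, of P PDL X p] by simp
  moreover have "G P PDL X {..<k+1} {k+1..<2*k+1} p =
     (\<Sum>q\<in>Qset P PDL k p. (\<Prod>i<k+1. X (q i)) * (\<Prod>i\<in>{k+1..<2*k+1}. cnj (X (q i))))"
    unfolding G_def Qset_def U
    by (rule sum.inter_filter[symmetric]) (simp add: finite_PiE assms)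
  ultimately show ?thesis unfolding Phi_def by simp
qed

theorem lemma1:
  fixes P :: int and PDL :: "int set" and X :: "int \<Rightarrow> complex" and k :: nat and p :: int
  assumes "P > 0" and "PDL \<subseteq> {0..<P}" and "k \<ge> 1"
  shows "Phi P PDL X k p = 1 / (of_int P)^2 *
           (\<Sum>q1\<in>PDL. \<Sum>q2\<in>PDL. X q1 * X q2 * cnj (Phi P PDL X (k-1) ((q1 + q2 - p) mod P)))
       \<and> Phi P PDL X k p = 1 / (of_int P)^2 *
           (\<Sum>q1\<in>PDL. \<Sum>q3\<in>PDL. X q1 * cnj (X q3) * Phi P PDL X (k-1) ((p - q1 + q3) mod P))"
proof -
  have fin: "finite PDL" using assms(2) finite_subset by blast
  obtain m where k: "k = Suc m" using assms(3) by (cases k) auto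
  define c where "c = 1 / (of_int P :: complex) ^ (2*m+1)"
  have cP: "1 / (of_int P :: complex) ^ (2*k+1) = 1 / (of_int P)^2 * c"
    unfolding c_def k by (simp add: power_add[symmetric] field_simps)
  have ccnj: "cnj c = c" unfolding c_def by simp
  have LHS: "Phi P PDL X k p = 1 / (of_int P)^2 * (c * F P PDL X (Suc (Suc m)) (Suc m) p)"
    using Phi_F[OF fin, where P=P and X=X and k=k and p=p] unfolding cP by (simp add: k del: F.simps)
  have R1: "Phi P PDL X (k-1) r = c * F P PDL X (Suc m) m r" for r
    using Phi_F[OF fin, where P=P and X=X and k="k-1" and p=r] by (simp add: k c_def del: F.simps)
  have e1: "F P PDL X (Suc (Suc m)) (Suc m) p =
      (\<Sum>q1\<in>PDL. \<Sum>q2\<in>PDL. X q1 * X q2 * cnj (F P PDL X (Suc m) m ((q1 + q2 - p) mod P)))"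
  proof -
    have "cnj (F P PDL X (Suc m) m ((q1 + q2 - p) mod P)) = F P PDL X m (Suc m) (p - q1 - q2)" for q1 q2
      unfolding F_cnj by (rule F_mod) (simp add: mod_minus_eq algebra_simps)
    then show ?thesis by (simp add: sum_distrib_left algebra_simps)
  qed
  have e2: "F P PDL X (Suc (Suc m)) (Suc m) p =
      (\<Sum>q1\<in>PDL. \<Sum>q3\<in>PDL. X q1 * cnj (X q3) * F P PDL X (Suc m) m ((p - q1 + q3) mod P))"
  proof -
    have "F P PDL X (Suc m) m ((p - q1 + q3) mod P) = F P PDL X (Suc m) m (p - q1 + q3)" for q1 q3
      by (rule F_mod) simp
    then have "(\<Sum>q1\<in>PDL. \<Sum>q3\<in>PDL. X q1 * cnj (X q3) * F P PDL X (Suc m) m ((p - q1 + q3) mod P))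
      = (\<Sum>q1\<in>PDL. \<Sum>q3\<in>PDL. X q1 * cnj (X q3) * F P PDL X (Suc m) m (p - q1 + q3))" by simp
    moreover have "F P PDL X (Suc (Suc m)) (Suc m) p =
      (\<Sum>q1\<in>PDL. \<Sum>q3\<in>PDL. X q1 * cnj (X q3) * F P PDL X (Suc m) m (p - q1 + q3))"
    proof -
      have "F P PDL X (Suc (Suc m)) (Suc m) p = (\<Sum>x\<in>PDL. X x * F P PDL X (Suc m) (Suc m) (p - x))"
        by (rule F.simps(3))
      also have "\<dots> = (\<Sum>x\<in>PDL. X x * (\<Sum>y\<in>PDL. cnj (X y) * F P PDL X (Suc m) m (p - x + y)))"
        by (simp only: F_B[where n="Suc m"])
      finally show ?thesis by (simp only: sum_distrib_left mult.assoc)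
    qed
    ultimately show ?thesis by simp
  qed
  show ?thesis
  proof
    show "Phi P PDL X k p = 1 / (of_int P)^2 *
           (\<Sum>q1\<in>PDL. \<Sum>q2\<in>PDL. X q1 * X q2 * cnj (Phi P PDL X (k-1) ((q1 + q2 - p) mod P)))"
      unfolding LHS R1 e1 complex_cnj_mult ccnj
      by (simp add: sum_distrib_left algebra_simps del: F.simps)
    show "Phi P PDL X k p = 1 / (of_int P)^2 *
           (\<Sum>q1\<in>PDL. \<Sum>q3\<in>PDL. X q1 * cnj (X q3) * Phi P PDL X (k-1) ((p - q1 + q3) mod P))"
      unfolding LHS R1 e2
      by (simp add: sum_distrib_left algebra_simps del: F.simps)
  qed
qed

end
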